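(* Let $C$ be a nonsingular affine curve over $\mathbb{R}$ with $C(\mathbb{R})$ compact and non-empty. Let $P_1,\dots,P_r\in C(\mathbb{R})$ and let $A=A(P_1,\dots,P_r)$ be the ring of all continuous functions $C(\mathbb{R})\to\mathbb{R}$ that are real analytic in suitable neighborhoods of $P_1,\dots,P_r$. Let $\varphi,\psi\in A$ be such that $\psi-\varphi$ is nonnegative on $C(\mathbb{R})$ and vanishes at most in $P_1,\dots,P_r$. Then there exists a regular function $p\in\mathbb{R}[C]$ with $\varphi\le p\le\psi$ on $C(\mathbb{R})$.
   Context: $C(\mathbb{R})$ carries its natural structure of a one-dimensional real analytic manifold. *)

theory Defs
  imports "HOL-Analysis.Analysis"
begin

text \<open>Real polynomial functions in the variables x_i (i :: 'n), viewed as
functions on complex affine space complex^'n (real coefficients).  Since the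
base field is infinite, this ring is the polynomial ring R[x_i | i :: 'n].\<close>

inductive_set rpoly :: "(complex^'n \<Rightarrow> complex) set" where
  const: "(\<lambda>z. complex_of_real c) \<in> rpoly"
| var: "(\<lambda>z. z $ i) \<in> rpoly"
| add: "f \<in> rpoly \<Longrightarrow> g \<in> rpoly \<Longrightarrow> (\<lambda>z. f z + g z) \<in> rpoly"
| mult: "f \<in> rpoly \<Longrightarrow> g \<in> rpoly \<Longrightarrow> (\<lambda>z. f z * g z) \<in> rpoly"

definition poly_ideal :: "(complex^'n \<Rightarrow> complex) set \<Rightarrow> bool" where
  "poly_ideal I \<longleftrightarrow> I \<subseteq> rpoly \<and> (\<lambda>z. 0) \<in> I \<and>
     (\<forall>f\<in>I. \<forall>g\<in>I. (\<lambda>z. f z + g z) \<in> I) \<and>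
     (\<forall>f\<in>I. \<forall>g\<in>rpoly. (\<lambda>z. g z * f z) \<in> I)"

definition prime_poly_ideal :: "(complex^'n \<Rightarrow> complex) set \<Rightarrow> bool" where
  "prime_poly_ideal I \<longleftrightarrow> poly_ideal I \<and> I \<noteq> rpoly \<and>
     (\<forall>f\<in>rpoly. \<forall>g\<in>rpoly. (\<lambda>z. f z * g z) \<in> I \<longrightarrow> f \<in> I \<or> g \<in> I)"

definition krull_dim_one :: "(complex^'n \<Rightarrow> complex) set \<Rightarrow> bool" where
  "krull_dim_one I \<longleftrightarrow>
     (\<exists>Q. prime_poly_ideal Q \<and> I \<subset> Q) \<and>
     \<not> (\<exists>Q0 Q1 Q2. prime_poly_ideal Q0 \<and> prime_poly_ideal Q1 \<and> prime_poly_ideal Q2 \<and>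
          I \<subseteq> Q0 \<and> Q0 \<subset> Q1 \<and> Q1 \<subset> Q2)"

definition cvar :: "(complex^'n \<Rightarrow> complex) set \<Rightarrow> (complex^'n) set" where
  "cvar I = {z. \<forall>f\<in>I. f z = 0}"

definition pdiff :: "(complex^'n \<Rightarrow> complex) \<Rightarrow> 'n \<Rightarrow> complex^'n \<Rightarrow> complex" where
  "pdiff f i z = deriv (\<lambda>w. f (\<chi> j. if j = i then w else z $ j)) (z $ i)"

definition grad :: "(complex^'n \<Rightarrow> complex) \<Rightarrow> complex^'n \<Rightarrow> complex^'n" where
  "grad f z = (\<chi> i. pdiff f i z)"

text \<open>Nonsingular affine curve over R given by its (prime) ideal I in R[x]:
I prime of Krull dimension one, and at every (complex) point of the variety
the Jacobian matrix of I has rank n - 1 (Jacobian criterion).\<close>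
definition nonsingular_affine_curve :: "(complex^'n \<Rightarrow> complex) set \<Rightarrow> bool" where
  "nonsingular_affine_curve I \<longleftrightarrow> prime_poly_ideal I \<and> krull_dim_one I \<and>
     (\<forall>z\<in>cvar I. vec.dim {grad f z | f. f \<in> I} = CARD('n) - 1)"

definition cmap :: "real^'n \<Rightarrow> complex^'n" where
  "cmap x = (\<chi> i. complex_of_real (x $ i))"

definition real_points :: "(complex^'n \<Rightarrow> complex) set \<Rightarrow> (real^'n) set" where
  "real_points I = {x. \<forall>f\<in>I. f (cmap x) = 0}"

text \<open>Regular functions R[C] = R[x]/I, as functions on C(R).\<close>
definition regular_fun :: "(complex^'n \<Rightarrow> complex) set \<Rightarrow> (real^'n \<Rightarrow> real) \<Rightarrow> bool" where
  "regular_fun I p \<longleftrightarrow> (\<exists>q\<in>rpoly. \<forall>x\<in>real_points I. p x = Re (q (cmap x)))"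

definition real_analytic_on :: "(real \<Rightarrow> real) \<Rightarrow> real set \<Rightarrow> bool" where
  "real_analytic_on f S \<longleftrightarrow> (\<forall>t\<in>S. \<exists>d>0. \<exists>a::nat \<Rightarrow> real.
      \<forall>s. \<bar>s - t\<bar> < d \<longrightarrow> (\<lambda>k. a k * (s - t) ^ k) sums f s)"

text \<open>Local analytic parametrization of X at P (inverse of an analytic chart of the
one-dimensional real analytic manifold X = C(R)).\<close>
definition analytic_param :: "(real^'n) set \<Rightarrow> real^'n \<Rightarrow> (real \<Rightarrow> real^'n) \<Rightarrow> real \<Rightarrow> bool" where
  "analytic_param X P \<gamma> e \<longleftrightarrow> e > 0 \<and> \<gamma> 0 = P \<and>
     (\<forall>i. real_analytic_on (\<lambda>t. \<gamma> t $ i) {-e<..<e}) \<and>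
     (\<forall>t\<in>{-e<..<e}. \<exists>v. v \<noteq> 0 \<and> (\<gamma> has_vector_derivative v) (at t)) \<and>
     \<gamma> ` {-e<..<e} \<subseteq> X \<and> openin (top_of_set X) (\<gamma> ` {-e<..<e}) \<and>
     (\<exists>g. homeomorphism {-e<..<e} (\<gamma> ` {-e<..<e}) \<gamma> g)"

definition analytic_near :: "(real^'n) set \<Rightarrow> (real^'n \<Rightarrow> real) \<Rightarrow> real^'n \<Rightarrow> bool" where
  "analytic_near X f P \<longleftrightarrow>
     (\<exists>\<gamma> e. analytic_param X P \<gamma> e \<and> real_analytic_on (f \<circ> \<gamma>) {-e<..<e})"

definition ringA :: "(real^'n) set \<Rightarrow> (real^'n) set \<Rightarrow> (real^'n \<Rightarrow> real) set" where
  "ringA X Ps = {f. continuous_on X f \<and> (\<forall>P\<in>Ps. analytic_near X f P)}"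

end

theory Submission
  imports Defs "HOL-Complex_Analysis.Complex_Analysis"
begin

lemma rpoly_real: "q \<in> rpoly \<Longrightarrow> Im (q (cmap x)) = 0"
  by (induction q rule: rpoly.induct) (auto simp: cmap_def)

definition pf :: "(real^'n \<Rightarrow> real) \<Rightarrow> bool" where
  "pf p \<longleftrightarrow> (\<exists>q\<in>rpoly. \<forall>x. p x = Re (q (cmap x)))"

lemma pf_const: "pf (\<lambda>x. c)"
  unfolding pf_def by (rule bexI[OF _ rpoly.const[of c]]) simp

lemma pf_coord: "pf (\<lambda>x. x $ i)"
  unfolding pf_def by (rule bexI[OF _ rpoly.var[of i]]) (simp add: cmap_def)

lemma pf_add: "pf f \<Longrightarrow> pf g \<Longrightarrow> pf (\<lambda>x. f x + g x)"
  unfolding pf_def by (auto intro!: bexI[OF _ rpoly.add])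

lemma pf_mult: "pf f \<Longrightarrow> pf g \<Longrightarrow> pf (\<lambda>x. f x * g x)"
  unfolding pf_def
proof clarify
  fix q q' assume q: "q \<in> rpoly" "\<forall>x. f x = Re (q (cmap x))" and q': "q' \<in> rpoly" "\<forall>x. g x = Re (q' (cmap x))"
  show "\<exists>qa\<in>rpoly. \<forall>x. f x * g x = Re (qa (cmap x))"
    by (rule bexI[OF _ rpoly.mult[OF q(1) q'(1)]]) (simp add: q q' rpoly_real[OF q(1)] rpoly_real[OF q'(1)])
qed

lemma pf_cmult: "pf f \<Longrightarrow> pf (\<lambda>x. c * f x)"
  using pf_mult[OF pf_const] .

lemma pf_diff: "pf f \<Longrightarrow> pf g \<Longrightarrow> pf (\<lambda>x. f x - g x)"
proof -
  assume a: "pf f" "pf g"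
  have "(\<lambda>x. f x - g x) = (\<lambda>x. f x + (-1) * g x)" by simp
  then show ?thesis using pf_add[OF a(1) pf_cmult[OF a(2), of "-1"]] by simp
qed

lemma pf_power: "pf f \<Longrightarrow> pf (\<lambda>x. f x ^ k)"
  by (induction k) (auto intro: pf_mult pf_const)

lemma pf_sum: "(\<And>i. i \<in> A \<Longrightarrow> pf (f i)) \<Longrightarrow> pf (\<lambda>x. \<Sum>i\<in>A. f i x)"
  by (induction A rule: infinite_finite_induct) (auto intro: pf_add pf_const)

lemma pf_prod: "(\<And>i. i \<in> A \<Longrightarrow> pf (f i)) \<Longrightarrow> pf (\<lambda>x. \<Prod>i\<in>A. f i x)"
  by (induction A rule: infinite_finite_induct) (auto intro: pf_mult pf_const)

lemma pf_normsq: "pf (\<lambda>x::real^'n. norm (x - P) ^ 2)"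
proof -
  have "norm (x - P) ^ 2 = (\<Sum>i\<in>UNIV. (x$i - P$i)^2)" for x
    by (simp add: norm_vec_def L2_set_def power2_norm_eq_inner sum_nonneg) 
  moreover have "pf (\<lambda>x::real^'n. \<Sum>i\<in>UNIV. (x$i - P$i)^2)"
    by (rule pf_sum, rule pf_power, rule pf_diff, rule pf_coord, rule pf_const)
  ultimately show ?thesis by (metis (no_types, lifting) ext)
qed

lemma lin_expand:
  fixes f :: "real^'n \<Rightarrow> real"
  assumes "bounded_linear f"
  shows "f x = (\<Sum>i\<in>UNIV. x $ i * f (axis i 1))"
proof -
  interpret L: bounded_linear f by fact
  have "f x = f (\<Sum>i\<in>UNIV. x $ i *\<^sub>R axis i 1)"
    by (subst (1) basis_expansion[of x, symmetric]) (simp only: scalar_mult_eq_scaleR)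
  also have "\<dots> = (\<Sum>i\<in>UNIV. x $ i * f (axis i 1))"
    by (simp add: L.sum L.scaleR)
  finally show ?thesis .
qed

lemma pf_rpf: "real_polynomial_function f \<Longrightarrow> pf (f :: real^'n \<Rightarrow> real)"
proof (induction rule: real_polynomial_function.induct)
  case (linear f)
  have e: "f = (\<lambda>x. \<Sum>i\<in>UNIV. x $ i * f (axis i 1))"
    by (rule ext, rule lin_expand[OF linear])
  have "pf (\<lambda>x. \<Sum>i\<in>UNIV. x $ i * f (axis i 1))"
    by (rule pf_sum, rule pf_mult, rule pf_coord, rule pf_const)
  then show ?case by (subst e)
next
  case (add f g) then show ?case using pf_add by blast
next
  case (mult f g) then show ?case using pf_mult by blast
qed (rule pf_const)

lemma pf_regular: "pf p \<Longrightarrow> regular_fun I p"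
  unfolding pf_def regular_fun_def by blast

lemma rpoly_lip:
  assumes "q \<in> rpoly"
  shows "\<exists>C\<ge>0. \<forall>x. norm (x - P) \<le> 1 \<longrightarrow> \<bar>Re (q (cmap x)) - Re (q (cmap P))\<bar> \<le> C * norm (x - P)"
  using assms
proof (induction q rule: rpoly.induct)
  case (const c)
  show ?case by (rule exI[of _ 0]) simp
next
  case (var i)
  show ?case
  proof (rule exI[of _ 1], intro conjI allI impI)
    fix x :: "real^'a"
    have "\<bar>(x - P) $ i\<bar> \<le> norm (x - P)" by (rule component_le_norm_cart)
    then show "\<bar>Re (cmap x $ i) - Re (cmap P $ i)\<bar> \<le> 1 * norm (x - P)"
      by (simp add: cmap_def)
  qed simp
next
  case (add f g)
  then obtain C1 C2 where C1: "C1 \<ge> 0" "\<forall>x. norm (x - P) \<le> 1 \<longrightarrow> \<bar>Re (f (cmap x)) - Re (f (cmap P))\<bar> \<le> C1 * norm (x - P)"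
    and C2: "C2 \<ge> 0" "\<forall>x. norm (x - P) \<le> 1 \<longrightarrow> \<bar>Re (g (cmap x)) - Re (g (cmap P))\<bar> \<le> C2 * norm (x - P)"
    by blast
  show ?case
  proof (rule exI[of _ "C1 + C2"], intro conjI allI impI)
    fix x assume x: "norm (x - P) \<le> 1"
    have "\<bar>Re (f (cmap x) + g (cmap x)) - Re (f (cmap P) + g (cmap P))\<bar>
        \<le> \<bar>Re (f (cmap x)) - Re (f (cmap P))\<bar> + \<bar>Re (g (cmap x)) - Re (g (cmap P))\<bar>" by simp
    also have "\<dots> \<le> C1 * norm (x - P) + C2 * norm (x - P)" using C1 C2 x by (meson add_mono)
    finally show "\<bar>Re (f (cmap x) + g (cmap x)) - Re (f (cmap P) + g (cmap P))\<bar> \<le> (C1 + C2) * norm (x - P)"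
      by (simp add: distrib_right)
  qed (use C1 C2 in simp)
next
  case (mult f g)
  then obtain C1 C2 where C1: "C1 \<ge> 0" "\<forall>x. norm (x - P) \<le> 1 \<longrightarrow> \<bar>Re (f (cmap x)) - Re (f (cmap P))\<bar> \<le> C1 * norm (x - P)"
    and C2: "C2 \<ge> 0" "\<forall>x. norm (x - P) \<le> 1 \<longrightarrow> \<bar>Re (g (cmap x)) - Re (g (cmap P))\<bar> \<le> C2 * norm (x - P)"
    by blast
  define a0 where "a0 = Re (f (cmap P))"
  define b0 where "b0 = Re (g (cmap P))"
  show ?case
  proof (rule exI[of _ "C1 * (\<bar>b0\<bar> + C2) + \<bar>a0\<bar> * C2"], intro conjI allI impI)
    fix x assume x: "norm (x - P) \<le> 1"
    define a where "a = Re (f (cmap x))"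
    define b where "b = Re (g (cmap x))"
    have ha: "\<bar>a - a0\<bar> \<le> C1 * norm (x - P)" using C1 x by (simp add: a_def a0_def)
    have hb: "\<bar>b - b0\<bar> \<le> C2 * norm (x - P)" using C2 x by (simp add: b_def b0_def)
    have hb2: "\<bar>b\<bar> \<le> \<bar>b0\<bar> + C2"
    proof -
      have "C2 * norm (x - P) \<le> C2" using x C2(1) by (simp add: mult_left_le)
      then show ?thesis using hb by linarith
    qed
    have eq: "Re (f (cmap x) * g (cmap x)) - Re (f (cmap P) * g (cmap P)) = (a - a0) * b + a0 * (b - b0)"
      using rpoly_real[OF mult.hyps(1)] rpoly_real[OF mult.hyps(2)]
      by (simp add: a_def b_def a0_def b0_def algebra_simps)
    have "\<bar>(a - a0) * b + a0 * (b - b0)\<bar> \<le> \<bar>a - a0\<bar> * \<bar>b\<bar> + \<bar>a0\<bar> * \<bar>b - b0\<bar>"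
      by (metis abs_mult abs_triangle_ineq)
    also have "\<dots> \<le> (C1 * norm (x - P)) * (\<bar>b0\<bar> + C2) + \<bar>a0\<bar> * (C2 * norm (x - P))"
      by (intro add_mono mult_mono ha hb2 mult_left_mono hb) (use C1 in auto)
    finally show "\<bar>Re (f (cmap x) * g (cmap x)) - Re (f (cmap P) * g (cmap P))\<bar>
        \<le> (C1 * (\<bar>b0\<bar> + C2) + \<bar>a0\<bar> * C2) * norm (x - P)"
      by (simp only: eq) (simp add: algebra_simps)
  qed (use C1 C2 in simp)
qed

lemma pf_lip:
  assumes "pf p"
  shows "\<exists>C\<ge>0. \<forall>x. norm (x - P) \<le> 1 \<longrightarrow> \<bar>p x - p P\<bar> \<le> C * norm (x - P)"
  using assms rpoly_lip unfolding pf_def by metis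

lemma pf_bdd:
  assumes "pf p"
  shows "\<exists>B. \<forall>x. norm (x - P) \<le> 1 \<longrightarrow> \<bar>p x\<bar> \<le> B"
proof -
  obtain C where C: "C \<ge> 0" "\<forall>x. norm (x - P) \<le> 1 \<longrightarrow> \<bar>p x - p P\<bar> \<le> C * norm (x - P)"
    using pf_lip[OF assms] by blast
  show ?thesis
  proof (rule exI[of _ "\<bar>p P\<bar> + C"], intro allI impI)
    fix x assume x: "norm (x - P) \<le> 1"
    have "C * norm (x - P) \<le> C" using x C(1) by (simp add: mult_left_le)
    then show "\<bar>p x\<bar> \<le> \<bar>p P\<bar> + C" using C(2) x by fastforce
  qed
qed

lemma pf_cont: "pf p \<Longrightarrow> continuous_on S p"
  unfolding pf_def
proof clarify
  fix q assume q: "q \<in> rpoly" "\<forall>x. p x = Re (q (cmap x))"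
  have "continuous_on UNIV (\<lambda>x. Re (q (cmap x)))"
    using q(1)
  proof (induction q rule: rpoly.induct)
    case (var i)
    show ?case by (simp add: cmap_def continuous_on_component)
  next
    case (mult f g)
    have "(\<lambda>x. Re (f (cmap x) * g (cmap x))) = (\<lambda>x. Re (f (cmap x)) * Re (g (cmap x)))"
      using rpoly_real[OF mult.hyps(1)] rpoly_real[OF mult.hyps(2)] by auto
    moreover have "continuous_on UNIV (\<lambda>x. Re (f (cmap x)) * Re (g (cmap x)))"
      using mult.IH by (rule continuous_on_mult)
    ultimately show ?case by (simp only:)
  qed (auto intro!: continuous_intros)
  moreover have "p = (\<lambda>x. Re (q (cmap x)))" using q(2) by auto
  ultimately show "continuous_on S p" using continuous_on_subset by blast
qed

definition oclose :: "(real^'n) set \<Rightarrow> (real^'n \<Rightarrow> real) \<Rightarrow> (real^'n \<Rightarrow> real) \<Rightarrow> real^'n \<Rightarrow> nat \<Rightarrow> bool" where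
  "oclose X f h P N \<longleftrightarrow> (\<exists>C r. r > 0 \<and> (\<forall>x\<in>X. norm (x - P) < r \<longrightarrow> \<bar>f x - h x\<bar> \<le> C * norm (x - P) ^ N))"

lemma combine:
  assumes "finite S"
    and loc: "\<forall>P\<in>S. \<exists>h. pf h \<and> oclose X f h P N"
  shows "\<exists>h. pf h \<and> (\<forall>P\<in>S. oclose X f h P N)"
  using assms
proof (induction S rule: finite_induct)
  case empty
  then show ?case using pf_const by blast
next
  case (insert P S)
  then obtain h where h: "pf h" "\<forall>Q\<in>S. oclose X f h Q N" by blast
  obtain hP where hP: "pf hP" "oclose X f hP P N" using insert.prems by blast
  define W where "W = (\<lambda>x::real^'a. \<Prod>Q\<in>S. (norm (x - Q) ^ 2) ^ N)"
  have WP: "W P > 0" unfolding W_def using insert.hyps(2)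
    by (intro prod_pos zero_less_power) auto
  define u where "u = (\<lambda>x. 1 - W x / W P)"
  define a where "a = (\<lambda>x. (hP x - h x) * (\<Sum>k<N. u x ^ k) * (1 / W P))"
  define h' where "h' = (\<lambda>x. h x + W x * a x)"
  have pfW: "pf W" unfolding W_def by (intro pf_prod pf_power pf_normsq)
  have pfu: "pf u" unfolding u_def
    using pf_diff[OF pf_const pf_cmult[OF pfW, of "1 / W P"]] by (simp add: field_simps)
  have pfa: "pf a" unfolding a_def
    by (intro pf_mult pf_diff hP(1) h(1) pf_sum pf_power pfu pf_const)
  have pfh': "pf h'" unfolding h'_def by (intro pf_add pf_mult h(1) pfW pfa)
  have key: "W x * a x = (hP x - h x) * (1 - u x ^ N)" for x
  proof -
    have e1: "W x / W P = 1 - u x" by (simp add: u_def)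
    have "W x * a x = (hP x - h x) * ((W x / W P) * (\<Sum>k<N. u x ^ k))"
      unfolding a_def by simp
    then have "W x * a x = (hP x - h x) * ((1 - u x) * (\<Sum>k<N. u x ^ k))"
      by (simp only: e1)
    also have "\<dots> = (hP x - h x) * (1 - u x ^ N)" by (simp add: one_diff_power_eq)
    finally show ?thesis .
  qed
  have "oclose X f h' P N"
  proof -
    obtain CP rP where CP: "rP > 0" "\<forall>x\<in>X. norm (x - P) < rP \<longrightarrow> \<bar>f x - hP x\<bar> \<le> CP * norm (x - P) ^ N"
      using hP(2) unfolding oclose_def by blast
    obtain Cu where Cu: "Cu \<ge> 0" "\<forall>x. norm (x - P) \<le> 1 \<longrightarrow> \<bar>u x - u P\<bar> \<le> Cu * norm (x - P)"
      using pf_lip[OF pfu] by blast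
    have uP: "u P = 0" using WP by (simp add: u_def)
    obtain B where B: "\<forall>x. norm (x - P) \<le> 1 \<longrightarrow> \<bar>hP x - h x\<bar> \<le> B"
      using pf_bdd[OF pf_diff[OF hP(1) h(1)]] by blast
    show ?thesis unfolding oclose_def
    proof (intro exI conjI ballI impI)
      show "min rP 1 > 0" using CP by simp
      fix x assume x: "x \<in> X" "norm (x - P) < min rP 1"
      have "f x - h' x = (f x - hP x) + (hP x - h x) * u x ^ N"
        unfolding h'_def key by (simp add: algebra_simps)
      then have "\<bar>f x - h' x\<bar> \<le> \<bar>f x - hP x\<bar> + \<bar>hP x - h x\<bar> * \<bar>u x\<bar> ^ N"
        by (metis abs_mult abs_triangle_ineq power_abs)
      also have "\<dots> \<le> CP * norm (x - P) ^ N + B * (Cu * norm (x - P)) ^ N"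
      proof (intro add_mono mult_mono power_mono)
        show "\<bar>f x - hP x\<bar> \<le> CP * norm (x - P) ^ N" using CP x by auto
        show "\<bar>hP x - h x\<bar> \<le> B" using B x by auto
        show "\<bar>u x\<bar> \<le> Cu * norm (x - P)" using Cu x uP by auto
        show "0 \<le> B" using B[rule_format, of P] by auto
      qed auto
      also have "\<dots> = (CP + B * Cu ^ N) * norm (x - P) ^ N"
        by (simp add: power_mult_distrib algebra_simps)
      finally show "\<bar>f x - h' x\<bar> \<le> (CP + B * Cu ^ N) * norm (x - P) ^ N" .
    qed
  qed
  moreover have "oclose X f h' Q N" if Q: "Q \<in> S" for Q
  proof -
    obtain CQ rQ where CQ: "rQ > 0" "\<forall>x\<in>X. norm (x - Q) < rQ \<longrightarrow> \<bar>f x - h x\<bar> \<le> CQ * norm (x - Q) ^ N"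
      using h(2) Q unfolding oclose_def by blast
    define R where "R = (\<lambda>x::real^'a. \<Prod>Q'\<in>S - {Q}. (norm (x - Q') ^ 2) ^ N)"
    have WR: "W x = (norm (x - Q) ^ 2) ^ N * R x" for x
      unfolding W_def R_def by (rule prod.remove[OF insert.hyps(1) Q])
    have pfR: "pf R" unfolding R_def by (intro pf_prod pf_power pf_normsq)
    obtain BR where BR: "\<forall>x. norm (x - Q) \<le> 1 \<longrightarrow> \<bar>R x\<bar> \<le> BR" using pf_bdd[OF pfR] by blast
    obtain Ba where Ba: "\<forall>x. norm (x - Q) \<le> 1 \<longrightarrow> \<bar>a x\<bar> \<le> Ba" using pf_bdd[OF pfa] by blast
    have BR0: "BR \<ge> 0" using BR[rule_format, of Q] by auto
    have Ba0: "Ba \<ge> 0" using Ba[rule_format, of Q] by auto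
    show ?thesis unfolding oclose_def
    proof (intro exI conjI ballI impI)
      show "min rQ 1 > 0" using CQ by simp
      fix x assume x: "x \<in> X" "norm (x - Q) < min rQ 1"
      define d where "d = norm (x - Q)"
      have d0: "0 \<le> d" "d \<le> 1" using x by (auto simp: d_def)
      have "\<bar>W x * a x\<bar> = d ^ (2 * N) * \<bar>R x\<bar> * \<bar>a x\<bar>"
        by (simp add: WR abs_mult d_def power_mult)
      also have "\<dots> \<le> d ^ N * BR * Ba"
      proof (intro mult_mono)
        show "d ^ (2 * N) \<le> d ^ N" using d0 by (intro power_decreasing) auto
      qed (use BR Ba x d0 BR0 in \<open>auto simp: d_def\<close>)
      finally have 1: "\<bar>W x * a x\<bar> \<le> BR * Ba * d ^ N" by (simp add: algebra_simps)
      have "\<bar>f x - h' x\<bar> \<le> \<bar>f x - h x\<bar> + \<bar>W x * a x\<bar>" unfolding h'_def by linarith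
      also have "\<dots> \<le> CQ * d ^ N + BR * Ba * d ^ N" using 1 CQ x by (auto simp: d_def)
      finally show "\<bar>f x - h' x\<bar> \<le> (CQ + BR * Ba) * norm (x - Q) ^ N"
        by (simp add: d_def algebra_simps)
    qed
  qed
  ultimately show ?case using pfh' by blast
qed

lemma g_local:
  fixes Z :: "(real^'n) set"
  assumes "finite Z" "P \<in> Z"
  shows "\<exists>\<rho> \<gamma> B. \<rho> > 0 \<and> \<rho> \<le> 1 \<and> \<gamma> > 0 \<and> B > 0 \<and> (\<forall>x. norm (x - P) < \<rho> \<longrightarrow>
     \<gamma> * norm (x - P) ^ (2*K) \<le> (\<Prod>Q\<in>Z. (norm (x - Q) ^ 2) ^ K) \<and>
     (\<Prod>Q\<in>Z. (norm (x - Q) ^ 2) ^ K) \<le> B * norm (x - P) ^ (2*K))"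
proof -
  define R where "R = (\<lambda>x::real^'n. \<Prod>Q'\<in>Z - {P}. (norm (x - Q') ^ 2) ^ K)"
  have WR: "(\<Prod>Q\<in>Z. (norm (x - Q) ^ 2) ^ K) = norm (x - P) ^ (2*K) * R x" for x
    unfolding R_def by (subst prod.remove[OF assms]) (simp add: power_mult)
  have pfR: "pf R" unfolding R_def by (intro pf_prod pf_power pf_normsq)
  have RP: "R P > 0" unfolding R_def by (intro prod_pos zero_less_power) auto
  have "continuous (at P) R" using pf_cont[OF pfR, of UNIV] by (simp add: continuous_on_eq_continuous_at)
  then obtain \<rho> where \<rho>: "\<rho> > 0" "\<forall>x. dist x P < \<rho> \<longrightarrow> dist (R x) (R P) < R P / 2"
    using RP unfolding continuous_at_eps_delta by (metis half_gt_zero)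
  obtain B where B: "\<forall>x. norm (x - P) \<le> 1 \<longrightarrow> \<bar>R x\<bar> \<le> B" using pf_bdd[OF pfR] by blast
  show ?thesis
  proof (intro exI conjI allI impI)
    show "min \<rho> 1 > 0" "min \<rho> 1 \<le> 1" "R P / 2 > 0" "\<bar>B\<bar> + 1 > 0" using \<rho> RP by auto
    fix x assume x: "norm (x - P) < min \<rho> 1"
    have "dist (R x) (R P) < R P / 2" using \<rho>(2) x by (simp add: dist_norm)
    then have "R x \<ge> R P / 2" unfolding dist_real_def by linarith
    then have "R P / 2 * norm (x - P) ^ (2 * K) \<le> R x * norm (x - P) ^ (2 * K)"
      by (intro mult_right_mono) auto
    then show "R P / 2 * norm (x - P) ^ (2 * K) \<le> (\<Prod>Q\<in>Z. (norm (x - Q) ^ 2) ^ K)"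
      unfolding WR by (metis (no_types) mult.commute)
    have "\<bar>R x\<bar> \<le> B" using B x by simp
    then have "R x \<le> \<bar>B\<bar> + 1" by linarith
    then have "R x * norm (x - P) ^ (2 * K) \<le> (\<bar>B\<bar> + 1) * norm (x - P) ^ (2 * K)"
      by (intro mult_right_mono) auto
    then show "(\<Prod>Q\<in>Z. (norm (x - Q) ^ 2) ^ K) \<le> (\<bar>B\<bar> + 1) * norm (x - P) ^ (2 * K)"
      unfolding WR by (metis (no_types) mult.commute)
  qed
qed

lemma assembly:
  fixes X Z :: "(real^'n) set" and \<phi> \<psi> :: "real^'n \<Rightarrow> real"
  assumes X: "compact X" and Z: "finite Z" "Z \<subseteq> X"
    and c\<phi>: "continuous_on X \<phi>" and c\<psi>: "continuous_on X \<psi>"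
    and le: "\<forall>x\<in>X. \<phi> x \<le> \<psi> x" and zer: "\<forall>x\<in>X. \<psi> x = \<phi> x \<longrightarrow> x \<in> Z"
    and A: "\<forall>P\<in>Z. \<exists>k c r. c > 0 \<and> r > 0 \<and> (\<forall>x\<in>X. norm (x - P) < r \<longrightarrow> c * norm (x - P) ^ k \<le> \<psi> x - \<phi> x)"
    and B: "\<forall>P\<in>Z. \<forall>N. \<exists>h. pf h \<and> oclose X \<phi> h P N"
  shows "\<exists>p. pf p \<and> (\<forall>x\<in>X. \<phi> x \<le> p x \<and> p x \<le> \<psi> x)"
proof -
  obtain kf cf rf where kcr: "\<forall>P\<in>Z. cf P > 0 \<and> rf P > 0 \<and> (\<forall>x\<in>X. norm (x - P) < rf P \<longrightarrow> cf P * norm (x - P) ^ (kf P) \<le> \<psi> x - \<phi> x)"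
    using A by metis
  define K where "K = (\<Sum>P\<in>Z. kf P) + 1"
  have K1: "K \<ge> 1" by (simp add: K_def)
  have kK: "kf P \<le> 2 * K" if "P \<in> Z" for P
    using member_le_sum[OF that, of kf] Z(1) by (simp add: K_def)
  define N where "N = 2 * K + 1"
  obtain h where h: "pf h" "\<forall>P\<in>Z. oclose X \<phi> h P N"
    using combine[OF Z(1), of X \<phi> N] B by blast
  define g where "g = (\<lambda>x::real^'n. \<Prod>Q\<in>Z. (norm (x - Q) ^ 2) ^ K)"
  have pfg: "pf g" unfolding g_def by (intro pf_prod pf_power pf_normsq)
  have g0: "g x \<ge> 0" for x unfolding g_def by (intro prod_nonneg) auto
  have gZ: "g x = 0" if "x \<in> Z" for x
    unfolding g_def using that Z(1) K1 by (subst prod_zero_iff) auto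
  have gnZ: "g x > 0" if "x \<notin> Z" for x
    unfolding g_def using that by (intro prod_pos zero_less_power) auto
  obtain \<rho>f \<gamma>f Bf where gl: "\<forall>P\<in>Z. \<rho>f P > 0 \<and> \<rho>f P \<le> 1 \<and> \<gamma>f P > 0 \<and> Bf P > 0 \<and> (\<forall>x. norm (x - P) < \<rho>f P \<longrightarrow>
     \<gamma>f P * norm (x - P) ^ (2*K) \<le> g x \<and> g x \<le> Bf P * norm (x - P) ^ (2*K))"
    using g_local[OF Z(1), of _ K] unfolding g_def by metis
  define s where "s = (\<lambda>P. min (rf P) (\<rho>f P))"
  have s: "s P > 0" "s P \<le> 1" if "P \<in> Z" for P using kcr gl that by (auto simp: s_def)
  have "\<exists>\<delta>>0. \<forall>x\<in>X. 2 * \<delta> * g x \<le> \<psi> x - \<phi> x"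
  proof -
    define Y where "Y = X - (\<Union>P\<in>Z. ball P (s P))"
    have cY: "compact Y" unfolding Y_def using X by (intro compact_diff) auto
    have posY: "\<psi> x - \<phi> x > 0" if "x \<in> Y" for x
    proof -
      have "x \<in> X" "x \<notin> Z" using that s(1) unfolding Y_def by force+
      then show ?thesis using le zer by force
    qed
    obtain G where G: "G > 0" "\<forall>x\<in>X. g x \<le> G"
    proof -
      have "bounded (g ` X)" using X pf_cont[OF pfg] by (intro compact_imp_bounded compact_continuous_image)
      then obtain G0 where "\<forall>x\<in>X. \<bar>g x\<bar> \<le> G0" by (auto simp: bounded_real)
      then show ?thesis using that[of "\<bar>G0\<bar> + 1"] by fastforce
    qed
    obtain mG where mG: "mG > 0" "\<forall>x\<in>Y. mG * g x \<le> \<psi> x - \<phi> x"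
    proof (cases "Y = {}")
      case True then show ?thesis using that[of 1] by auto
    next
      case False
      have "continuous_on Y (\<lambda>x. \<psi> x - \<phi> x)" unfolding Y_def
        by (intro continuous_on_diff continuous_on_subset[OF c\<psi>] continuous_on_subset[OF c\<phi>]) auto
      then obtain y where y: "y \<in> Y" "\<forall>x\<in>Y. \<psi> y - \<phi> y \<le> \<psi> x - \<phi> x"
        using continuous_attains_inf[OF cY False] by blast
      define m where "m = \<psi> y - \<phi> y"
      have m: "m > 0" using posY y by (simp add: m_def)
      show ?thesis
      proof (rule that[of "m / G"])
        show "m / G > 0" using m G by simp
        show "\<forall>x\<in>Y. m / G * g x \<le> \<psi> x - \<phi> x"
        proof
          fix x assume x: "x \<in> Y"
          have "x \<in> X" using x by (simp add: Y_def)
          then have "g x / G \<le> 1" using G by simp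
          then have "m * (g x / G) \<le> m" using m by (intro mult_left_le) auto
          moreover have "m / G * g x = m * (g x / G)" by simp
          ultimately show "m / G * g x \<le> \<psi> x - \<phi> x" using y(2) x unfolding m_def by (metis order_trans)
        qed
      qed
    qed
    define \<delta>0 where "\<delta>0 = Min (insert mG ((\<lambda>P. cf P / Bf P) ` Z))"
    have \<delta>0: "\<delta>0 > 0" unfolding \<delta>0_def using Z(1) mG kcr gl by (subst Min_gr_iff) auto
    have \<delta>0le: "\<delta>0 \<le> mG" "\<And>P. P \<in> Z \<Longrightarrow> \<delta>0 \<le> cf P / Bf P"
      unfolding \<delta>0_def using Z(1) by auto
    show ?thesis
    proof (intro exI conjI ballI)
      show "\<delta>0 / 2 > 0" using \<delta>0 by simp
      fix x assume x: "x \<in> X"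
      show "2 * (\<delta>0 / 2) * g x \<le> \<psi> x - \<phi> x"
      proof (cases "x \<in> Y")
        case True
        have "\<delta>0 * g x \<le> mG * g x" using \<delta>0le(1) g0[of x] by (rule mult_right_mono)
        then show ?thesis using mG(2) True by force
      next
        case False
        then obtain P where P: "P \<in> Z" "norm (x - P) < s P" using x by (auto simp: Y_def dist_norm norm_minus_commute)
        define d where "d = norm (x - P)"
        have d: "0 \<le> d" "d \<le> 1" using P s[OF P(1)] by (auto simp: d_def)
        have 1: "cf P * d ^ (kf P) \<le> \<psi> x - \<phi> x" using kcr P x by (auto simp: d_def s_def)
        have 2: "d ^ (2*K) \<le> d ^ (kf P)" using d kK[OF P(1)] by (intro power_decreasing) auto
        have 3: "g x \<le> Bf P * d ^ (2*K)" using gl P by (auto simp: d_def s_def)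
        have "\<delta>0 * g x \<le> (cf P / Bf P) * (Bf P * d ^ (2*K))"
          using \<delta>0le(2)[OF P(1)] 3 \<delta>0 g0[of x] by (intro mult_mono) auto
        also have "\<dots> = cf P * d ^ (2*K)" using gl P by auto
        also have "\<dots> \<le> cf P * d ^ (kf P)" using 2 kcr P by (intro mult_left_mono) auto
        finally show ?thesis using 1 by simp
      qed
    qed
  qed
  then obtain \<delta> where \<delta>: "\<delta> > 0" "\<forall>x\<in>X. 2 * \<delta> * g x \<le> \<psi> x - \<phi> x" by blast
  define L where "L = (\<lambda>x. if x \<in> Z then 0 else (\<phi> x - h x) / g x)"
  have cL: "continuous_on X L"
    unfolding continuous_on_eq_continuous_within
  proof
    fix x0 assume x0: "x0 \<in> X"
    show "continuous (at x0 within X) L"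
    proof (cases "x0 \<in> Z")
      case True
      obtain Ch rh where Ch: "rh > 0" "\<forall>x\<in>X. norm (x - x0) < rh \<longrightarrow> \<bar>\<phi> x - h x\<bar> \<le> Ch * norm (x - x0) ^ N"
        using h(2) True unfolding oclose_def by blast
      have g1: "\<rho>f x0 > 0" "\<gamma>f x0 > 0" "\<forall>x. norm (x - x0) < \<rho>f x0 \<longrightarrow> \<gamma>f x0 * norm (x - x0) ^ (2*K) \<le> g x"
        using gl True by auto
      have L0: "L x0 = 0" using True by (simp add: L_def)
      show ?thesis unfolding continuous_within_eps_delta
      proof (intro allI impI)
        fix e :: real assume e: "e > 0"
        define C' where "C' = \<bar>Ch\<bar> + 1"
        have C': "C' > 0" by (simp add: C'_def)
        define d where "d = min (min rh (\<rho>f x0)) (e * \<gamma>f x0 / C')"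
        have d: "d > 0" using Ch g1 e C' by (simp add: d_def)
        show "\<exists>d>0. \<forall>x'\<in>X. dist x' x0 < d \<longrightarrow> dist (L x') (L x0) < e"
        proof (intro exI conjI ballI impI)
          show "d > 0" by fact
          fix x' assume x': "x' \<in> X" "dist x' x0 < d"
          show "dist (L x') (L x0) < e"
          proof (cases "x' \<in> Z")
            case True then show ?thesis using e L0 by (simp add: L_def)
          next
            case False
            define t where "t = norm (x' - x0)"
            have t: "t > 0" using False \<open>x0 \<in> Z\<close> by (auto simp: t_def)
            have tl: "t < rh" "t < \<rho>f x0" "t < e * \<gamma>f x0 / C'" using x' by (auto simp: t_def d_def dist_norm)
            have gx: "g x' > 0" using gnZ[OF False] .
            have 1: "\<bar>\<phi> x' - h x'\<bar> \<le> Ch * t ^ N" using Ch x' tl by (simp add: t_def)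
            have 2: "\<gamma>f x0 * t ^ (2*K) \<le> g x'" using g1 tl by (simp add: t_def)
            have "Ch * t ^ N = Ch * (t * t ^ (2*K))" by (simp add: N_def)
            also have "\<dots> \<le> C' * (t * t ^ (2*K))"
              using t by (intro mult_right_mono) (auto simp: C'_def)
            also have "\<dots> = C' * t * t ^ (2*K)" by simp
            finally have "Ch * t ^ N \<le> C' * t * t ^ (2*K)" .
            also have "\<dots> = (C' * t / \<gamma>f x0) * (\<gamma>f x0 * t ^ (2*K))" using g1 by simp
            also have "\<dots> \<le> (C' * t / \<gamma>f x0) * g x'"
              using 2 C' t g1 by (intro mult_left_mono) auto
            finally have "\<bar>\<phi> x' - h x'\<bar> / g x' \<le> C' * t / \<gamma>f x0"
              using 1 gx by (simp add: divide_le_eq)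
            also have "\<dots> < e" using tl(3) C' g1 by (simp add: field_simps)
            finally show ?thesis using False L0 gx by (simp add: L_def dist_real_def abs_divide)
          qed
        qed
      qed
    next
      case False
      have "open (- Z)" using Z(1) by (simp add: finite_imp_closed open_Compl)
      then obtain \<epsilon> where \<epsilon>: "\<epsilon> > 0" "\<forall>y. dist y x0 < \<epsilon> \<longrightarrow> y \<in> - Z"
        using False unfolding open_dist by (metis ComplI dist_commute)
      have "continuous_on (X - Z) (\<lambda>x. (\<phi> x - h x) / g x)"
        using gnZ by (intro continuous_on_divide continuous_on_diff continuous_on_subset[OF c\<phi>]
            pf_cont h(1) pfg) (auto dest: gnZ)
      then have c1: "continuous (at x0 within (X - Z)) (\<lambda>x. (\<phi> x - h x) / g x)"
        using x0 False by (simp add: continuous_on_eq_continuous_within)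
      show ?thesis unfolding continuous_within_eps_delta
      proof (intro allI impI)
        fix e :: real assume e: "e > 0"
        obtain d where d: "d > 0" "\<forall>x'\<in>X - Z. dist x' x0 < d \<longrightarrow> dist ((\<phi> x' - h x') / g x') ((\<phi> x0 - h x0) / g x0) < e"
          using c1 e unfolding continuous_within_eps_delta by blast
        show "\<exists>d>0. \<forall>x'\<in>X. dist x' x0 < d \<longrightarrow> dist (L x') (L x0) < e"
        proof (intro exI conjI ballI impI)
          show "min d \<epsilon> > 0" using d \<epsilon> by simp
          fix x' assume x': "x' \<in> X" "dist x' x0 < min d \<epsilon>"
          then have "x' \<notin> Z" using \<epsilon> by auto
          then show "dist (L x') (L x0) < e" using d x' False by (auto simp: L_def)
        qed
      qed
    qed
  qed
  obtain q where q: "real_polynomial_function q" "\<And>x. x \<in> X \<Longrightarrow> \<bar>(L x + \<delta>) - q x\<bar> < \<delta> / 2"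
    using Stone_Weierstrass_real_polynomial_function[OF X continuous_on_add[OF cL continuous_on_const], of "\<delta> / 2"] \<delta>
    by auto
  define p where "p = (\<lambda>x. h x + g x * q x)"
  have pfp: "pf p" unfolding p_def by (intro pf_add pf_mult h(1) pfg pf_rpf q(1))
  have "\<phi> x \<le> p x \<and> p x \<le> \<psi> x" if x: "x \<in> X" for x
  proof (cases "x \<in> Z")
    case True
    obtain C r where "r > 0" "\<forall>y\<in>X. norm (y - x) < r \<longrightarrow> \<bar>\<phi> y - h y\<bar> \<le> C * norm (y - x) ^ N"
      using h(2) True unfolding oclose_def by blast
    then have "\<phi> x = h x" using x by (auto simp: N_def)
    moreover have "\<phi> x \<le> \<psi> x" using le x by blast
    ultimately show ?thesis using gZ[OF True] by (simp add: p_def)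
  next
    case False
    have gx: "g x > 0" using gnZ[OF False] .
    have Lx: "g x * L x = \<phi> x - h x" using gx False by (simp add: L_def)
    have "\<bar>(L x + \<delta>) - q x\<bar> < \<delta> / 2" by (rule q(2)[OF x])
    then have qx: "L x + \<delta> / 2 < q x" "q x < L x + 3 * \<delta> / 2" unfolding abs_less_iff by linarith+
    have "p x - \<phi> x = g x * (q x - L x)" unfolding p_def using Lx by (simp add: algebra_simps)
    moreover have "g x * (q x - L x) \<ge> 0" using gx qx \<delta> by simp
    moreover have "g x * (q x - L x) \<le> g x * (2 * \<delta>)" using gx qx by (intro mult_left_mono) auto
    ultimately show ?thesis using \<delta>(2) x by (auto simp: algebra_simps)
  qed
  then show ?thesis using pfp by blast
qed

lemma real_analytic_ext:
  assumes "real_analytic_on g {-e<..<e}" "e > 0"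
  shows "\<exists>d>0. \<exists>G. G holomorphic_on ball 0 d \<and> (\<forall>t::real. \<bar>t\<bar> < d \<longrightarrow> G (of_real t) = of_real (g t))"
proof -
  obtain d a where d: "d > 0" "\<forall>s. \<bar>s - 0\<bar> < d \<longrightarrow> (\<lambda>k. a k * (s - 0) ^ k) sums g s"
    using assms unfolding real_analytic_on_def by force
  define G where "G = (\<lambda>w::complex. \<Sum>k. of_real (a k) * w ^ k)"
  have cs: "(\<lambda>k. of_real (a k) * (complex_of_real s) ^ k) sums of_real (g s)" if "\<bar>s\<bar> < d" for s
  proof -
    have "(\<lambda>k. a k * s ^ k) sums g s" using d(2) that by simp
    then have "(\<lambda>k. complex_of_real (a k * s ^ k)) sums of_real (g s)" by (simp only: sums_of_real_iff)
    then show ?thesis by simp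
  qed
  have sw: "(\<lambda>k. of_real (a k) * w ^ k) sums G w" if "w \<in> ball 0 d" for w
  proof -
    define s where "s = (norm w + d) / 2"
    have w0: "norm w \<ge> 0" "norm w < d" using that by auto
    have s0: "s \<ge> 0" using w0 d(1) unfolding s_def by (auto simp: field_simps)
    have s1: "s < d" using w0 d(1) unfolding s_def by (auto simp: field_simps)
    have s2: "norm w < s" using w0 d(1) unfolding s_def by (auto simp: field_simps)
    note s0 = s0 s1 s2
    have s: "\<bar>s\<bar> < d" "norm w < norm (complex_of_real s)" using s0 by auto
    have "summable (\<lambda>k. of_real (a k) * (complex_of_real s) ^ k)" using cs[OF s(1)] by (rule sums_summable)
    then have "summable (\<lambda>k. of_real (a k) * w ^ k)" using s(2) by (rule powser_inside)
    then show ?thesis unfolding G_def by (rule summable_sums)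
  qed
  have "G holomorphic_on ball 0 d"
    by (rule power_series_holomorphic[where a = "\<lambda>k. of_real (a k)"]) (use sw in simp)
  moreover have "G (of_real t) = of_real (g t)" if "\<bar>t\<bar> < d" for t
    using sw[of "of_real t"] cs[OF that] that by (simp add: sums_unique2)
  ultimately show ?thesis using d(1) by blast
qed

lemma holo_tail:
  assumes "f holomorphic_on ball 0 r" "r > 0"
  shows "\<exists>M. \<forall>w. norm w < r / 2 \<longrightarrow>
     norm (f w - (\<Sum>n<N. (deriv ^^ n) f 0 / fact n * w ^ n)) \<le> M * norm w ^ N"
proof -
  define c where "c = (\<lambda>n. (deriv ^^ n) f 0 / fact n)"
  have ps: "(\<lambda>n. c n * w ^ n) sums f w" if "w \<in> ball 0 r" for w
    using holomorphic_power_series[OF assms(1) that] by (simp add: c_def)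
  define x :: complex where "x = of_real (3 * r / 4)"
  define z :: complex where "z = of_real (r / 2)"
  have "summable (\<lambda>n. c n * x ^ n)" using ps[of x] assms(2) by (auto simp: x_def intro: sums_summable)
  then have as: "summable (\<lambda>n. norm (c n * z ^ n))" by (rule powser_insidea) (use assms(2) in \<open>simp add: x_def z_def\<close>)
  have as2: "summable (\<lambda>n. norm (c (n + N)) * (r / 2) ^ n)"
  proof -
    have "summable (\<lambda>n. norm (c (n + N) * z ^ (n + N)))" using as by (subst summable_iff_shift)
    then have "summable (\<lambda>n. norm (c (n + N) * z ^ (n + N)) / (r / 2) ^ N)" by (rule summable_divide)
    moreover have "norm (c (n + N) * z ^ (n + N)) / (r / 2) ^ N = norm (c (n + N)) * (r / 2) ^ n" for n
      using assms(2) by (simp add: z_def norm_mult norm_power power_add)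
    ultimately show ?thesis by simp
  qed
  define M where "M = (\<Sum>n. norm (c (n + N)) * (r / 2) ^ n)"
  show ?thesis
  proof (intro exI allI impI)
    fix w :: complex assume w: "norm w < r / 2"
    have "(\<lambda>n. c (n + N) * w ^ (n + N)) sums (f w - (\<Sum>n<N. c n * w ^ n))"
    proof -
      have "w \<in> ball 0 r" using w assms(2) by simp
      then show ?thesis using ps[of w] by (subst sums_iff_shift) simp
    qed
    then have e: "f w - (\<Sum>n<N. c n * w ^ n) = (\<Sum>n. c (n + N) * w ^ (n + N))" by (simp add: sums_iff)
    have b: "norm (c (n + N) * w ^ (n + N)) \<le> norm w ^ N * (norm (c (n + N)) * (r / 2) ^ n)" for n
    proof -
      have "norm w ^ n \<le> (r / 2) ^ n" using w by (intro power_mono) auto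
      then have "norm w ^ n * norm (c (n + N)) \<le> (r / 2) ^ n * norm (c (n + N))"
        by (rule mult_right_mono) simp
      then have "norm w ^ N * (norm w ^ n * norm (c (n + N))) \<le> norm w ^ N * ((r / 2) ^ n * norm (c (n + N)))"
        by (rule mult_left_mono) simp
      then show ?thesis by (simp add: norm_mult norm_power power_add algebra_simps)
    qed
    have sb: "summable (\<lambda>n. norm w ^ N * (norm (c (n + N)) * (r / 2) ^ n))"
      using as2 by (rule summable_mult)
    have sn: "summable (\<lambda>n. norm (c (n + N) * w ^ (n + N)))"
      by (rule summable_comparison_test[OF _ sb]) (use b in auto)
    have "norm (\<Sum>n. c (n + N) * w ^ (n + N)) \<le> (\<Sum>n. norm (c (n + N) * w ^ (n + N)))"
      using sn by (rule summable_norm)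
    also have "\<dots> \<le> (\<Sum>n. norm w ^ N * (norm (c (n + N)) * (r / 2) ^ n))"
      using b sn sb by (rule suminf_le)
    also have "\<dots> = M * norm w ^ N" using as2 by (simp add: M_def suminf_mult)
    finally show "norm (f w - (\<Sum>n<N. (deriv ^^ n) f 0 / fact n * w ^ n)) \<le> M * norm w ^ N"
      using e by (simp add: c_def)
  qed
qed

lemma nonisolated:
  assumes "analytic_param X P \<gamma> e" "finite F" "\<rho> > 0"
  shows "\<exists>x\<in>X. x \<notin> F \<and> norm (x - P) < \<rho>"
proof -
  from assms(1) have e: "e > 0" and g0: "\<gamma> 0 = P" and sub: "\<gamma> ` {-e<..<e} \<subseteq> X"
    and hom: "\<exists>g. homeomorphism {-e<..<e} (\<gamma> ` {-e<..<e}) \<gamma> g"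
    unfolding analytic_param_def by auto
  from hom obtain g where hg: "homeomorphism {-e<..<e} (\<gamma> ` {-e<..<e}) \<gamma> g" by blast
  have g: "\<forall>x\<in>{-e<..<e}. g (\<gamma> x) = x" "continuous_on {-e<..<e} \<gamma>"
    using hg by (simp_all add: homeomorphism_def)
  have "continuous (at 0 within {-e<..<e}) \<gamma>" using g(2) e by (simp add: continuous_on_eq_continuous_within)
  then obtain \<delta> where \<delta>: "\<delta> > 0" "\<forall>t\<in>{-e<..<e}. dist t 0 < \<delta> \<longrightarrow> dist (\<gamma> t) (\<gamma> 0) < \<rho>"
    using assms(3) unfolding continuous_within_eps_delta by blast
  define m where "m = min \<delta> e"
  have m: "m > 0" using \<delta> e by (simp add: m_def)
  have sm: "{0<..<m} \<subseteq> {-e<..<e}" by (auto simp: m_def)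
  have inj: "inj_on \<gamma> {0<..<m}"
  proof (rule inj_on_inverseI[where g = g])
    fix x assume "x \<in> {0<..<m}"
    then show "g (\<gamma> x) = x" using g(1) sm by blast
  qed
  have "infinite {0<..<m}" using m by simp
  then have "infinite (\<gamma> ` {0<..<m})" using inj finite_imageD by blast
  then have "infinite (\<gamma> ` {0<..<m} - F)" using assms(2) by (rule Diff_infinite_finite[rotated])
  then obtain x where "x \<in> \<gamma> ` {0<..<m} - F" by (metis ex_in_conv finite.emptyI)
  then have x: "x \<in> \<gamma> ` {0<..<m}" "x \<notin> F" by auto
  then obtain t where t: "t \<in> {0<..<m}" "x = \<gamma> t" by blast
  have tA: "t \<in> {-e<..<e}" using t by (auto simp: m_def)
  have "dist t 0 < \<delta>" using t by (simp add: m_def dist_real_def)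
  then have "dist x P < \<rho>" using \<delta>(2) tA t g0 by blast
  moreover have "x \<in> X" using sub tA t by blast
  ultimately show ?thesis using x(2) by (auto simp: dist_norm)
qed

lemma chart:
  fixes X :: "(real^'n) set"
  assumes "analytic_near X f P"
  shows "\<exists>i r \<rho> K C. r > 0 \<and> \<rho> > 0 \<and> K holomorphic_on ball 0 r \<and>
     (\<forall>k. C k holomorphic_on ball 0 r \<and> C k 0 = 0) \<and>
     (\<forall>x\<in>X. norm (x - P) < \<rho> \<longrightarrow> complex_of_real (x$i - P$i) \<in> ball 0 r \<and>
        complex_of_real (f x) = K (complex_of_real (x$i - P$i)) \<and>
        (\<forall>k. complex_of_real (x$k - P$k) = C k (complex_of_real (x$i - P$i))))"
proof -
  obtain \<gamma> e where par: "analytic_param X P \<gamma> e" and an: "real_analytic_on (f \<circ> \<gamma>) {-e<..<e}"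
    using assms unfolding analytic_near_def by blast
  from par have e: "e > 0" and g0: "\<gamma> 0 = P"
    and anc: "\<forall>i. real_analytic_on (\<lambda>t. \<gamma> t $ i) {-e<..<e}"
    and der: "\<forall>t\<in>{-e<..<e}. \<exists>v. v \<noteq> 0 \<and> (\<gamma> has_vector_derivative v) (at t)"
    and sub: "\<gamma> ` {-e<..<e} \<subseteq> X" and op: "openin (top_of_set X) (\<gamma> ` {-e<..<e})"
    and hom: "\<exists>g. homeomorphism {-e<..<e} (\<gamma> ` {-e<..<e}) \<gamma> g"
    unfolding analytic_param_def by auto
  have "\<forall>k. \<exists>d G. d > 0 \<and> G holomorphic_on ball 0 d \<and> (\<forall>t::real. \<bar>t\<bar> < d \<longrightarrow> G (of_real t) = of_real (\<gamma> t $ k))"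
    using real_analytic_ext[OF _ e] anc by blast
  from choice[OF this] obtain dk where "\<forall>k. \<exists>G. dk k > 0 \<and> G holomorphic_on ball 0 (dk k) \<and> (\<forall>t::real. \<bar>t\<bar> < dk k \<longrightarrow> G (of_real t) = of_real (\<gamma> t $ k))" ..
  from choice[OF this] obtain Gk where dGall: "\<forall>k. dk k > 0 \<and> Gk k holomorphic_on ball 0 (dk k) \<and> (\<forall>t::real. \<bar>t\<bar> < dk k \<longrightarrow> Gk k (of_real t) = of_real (\<gamma> t $ k))" ..
  have dG: "\<And>k. dk k > 0" "\<And>k. Gk k holomorphic_on ball 0 (dk k)"
    "\<And>k t. \<bar>t\<bar> < dk k \<Longrightarrow> Gk k (of_real t) = of_real (\<gamma> t $ k)"
    using dGall by auto
  obtain d\<Phi> \<Phi> where d\<Phi>: "d\<Phi> > 0" "\<Phi> holomorphic_on ball 0 d\<Phi>"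
    "\<And>t. \<bar>t\<bar> < d\<Phi> \<Longrightarrow> \<Phi> (of_real t) = of_real ((f \<circ> \<gamma>) t)"
    using real_analytic_ext[OF an e] by blast
  define d1 where "d1 = Min (range dk)"
  have d1: "d1 > 0" "\<And>k. d1 \<le> dk k" unfolding d1_def using dG(1) by (auto simp: Min_gr_iff)
  define d0 where "d0 = min (min d1 d\<Phi>) e"
  have d0: "d0 > 0" "d0 \<le> e" "d0 \<le> d\<Phi>" "\<And>k. d0 \<le> dk k"
    using d1 d\<Phi>(1) e by (auto simp: d0_def intro: order_trans[OF _ d1(2)])
  have Gh: "Gk k holomorphic_on ball 0 d0" for k
    using dG(2) by (rule holomorphic_on_subset) (use d0(4)[of k] in auto)
  have \<Phi>h: "\<Phi> holomorphic_on ball 0 d0"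
    using d\<Phi>(2) by (rule holomorphic_on_subset) (use d0(3) in auto)
  have "(0::real) \<in> {-e<..<e}" using e by simp
  then obtain v where v: "v \<noteq> 0" "(\<gamma> has_vector_derivative v) (at 0)" using der by blast
  obtain i where vi: "v $ i \<noteq> 0" using v(1) by (metis vec_eq_iff zero_index)
  have dGi: "deriv (Gk i) 0 = of_real (v $ i)"
  proof -
    have h0: "(Gk i has_field_derivative deriv (Gk i) 0) (at (of_real 0))"
      using holomorphic_derivI[OF Gh open_ball, of 0] d0(1) by simp
    have h1: "((\<lambda>t::real. Gk i (of_real t)) has_vector_derivative deriv (Gk i) 0) (at 0)"
      using has_vector_derivative_real_field[OF h0] .
    have "((\<lambda>t. \<gamma> t $ i) has_vector_derivative v $ i) (at 0)"
      using bounded_linear.has_vector_derivative[OF bounded_linear_vec_nth v(2)] .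
    then have "((\<lambda>t. \<gamma> t $ i) has_field_derivative v $ i) (at 0)"
      by (simp add: has_real_derivative_iff_has_vector_derivative)
    then have h2: "((\<lambda>t. complex_of_real (\<gamma> t $ i)) has_vector_derivative of_real (v $ i)) (at 0)"
      by (rule has_vector_derivative_of_real)
    have h3: "((\<lambda>t::real. Gk i (of_real t)) has_vector_derivative of_real (v $ i)) (at 0)"
    proof (rule has_vector_derivative_transform_within_open[OF h2, of "ball 0 d0"])
      fix y :: real assume "y \<in> ball 0 d0"
      then have "\<bar>y\<bar> < dk i" using d0(4)[of i] by auto
      then show "complex_of_real (\<gamma> y $ i) = Gk i (of_real y)" using dG(3) by simp
    qed (use d0 in auto)
    show ?thesis using vector_derivative_unique_at[OF h1 h3] .
  qed
  define S where "S = (\<lambda>z. Gk i z - of_real (P $ i))"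
  have Sh: "S holomorphic_on ball 0 d0" unfolding S_def by (intro holomorphic_intros Gh)
  have dS: "deriv S 0 = of_real (v $ i)"
  proof -
    have "(Gk i has_field_derivative deriv (Gk i) 0) (at 0)"
      using holomorphic_derivI[OF Gh open_ball, of 0] d0(1) by simp
    then have "(S has_field_derivative deriv (Gk i) 0 - 0) (at 0)"
      unfolding S_def by (intro derivative_intros)
    then show ?thesis using dGi by (simp add: DERIV_imp_deriv)
  qed
  have G0: "Gk k 0 = of_real (P $ k)" for k
    using dG(3)[of 0 k] dG(1)[of k] g0 by simp
  have S0: "S 0 = 0" by (simp add: S_def G0)
  have c0: "(0::complex) \<in> ball 0 d0" using d0(1) by simp
  have dnz: "deriv S 0 \<noteq> 0" using dS vi by simp
  obtain r1 where r1: "r1 > 0" "ball (0::complex) r1 \<subseteq> ball 0 d0" "open (S ` ball 0 r1)" "inj_on S (ball 0 r1)"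
  proof (rule has_complex_derivative_locally_invertible[OF Sh c0 open_ball dnz])
    fix r assume "0 < r" "ball (0::complex) r \<subseteq> ball 0 d0" "open (S ` ball 0 r)" "inj_on S (ball 0 r)"
    then show thesis by (rule that)
  qed
  obtain T where T: "T holomorphic_on (S ` ball 0 r1)"
    "\<And>z. z \<in> ball 0 r1 \<Longrightarrow> deriv S z * deriv T (S z) = 1" "\<And>z. z \<in> ball 0 r1 \<Longrightarrow> T (S z) = z"
  proof (rule holomorphic_has_inverse[OF holomorphic_on_subset[OF Sh r1(2)] open_ball r1(4)])
    fix g assume "g holomorphic_on S ` ball 0 r1" "\<And>z. z \<in> ball 0 r1 \<Longrightarrow> deriv S z * deriv g (S z) = 1"
      "\<And>z. z \<in> ball 0 r1 \<Longrightarrow> g (S z) = z"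
    then show thesis by (rule that)
  qed
  have "0 \<in> S ` ball 0 r1" using S0 r1(1) by (metis centre_in_ball image_eqI)
  then obtain r where r: "r > 0" "ball 0 r \<subseteq> S ` ball 0 r1" using r1(3) openE by blast
  have Tball: "T ` ball 0 r \<subseteq> ball 0 r1" using r T(3) by auto
  have Th: "T holomorphic_on ball 0 r" using T(1) r(2) by (rule holomorphic_on_subset)
  define K where "K = \<Phi> \<circ> T"
  define C where "C = (\<lambda>k w. Gk k (T w) - of_real (P $ k))"
  have Kh: "K holomorphic_on ball 0 r" unfolding K_def
    using holomorphic_on_compose_gen[OF Th \<Phi>h] Tball r1(2) by blast
  have Ch: "C k holomorphic_on ball 0 r" for k
  proof -
    have "(Gk k \<circ> T) holomorphic_on ball 0 r"
      using holomorphic_on_compose_gen[OF Th Gh] Tball r1(2) by blast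
    then show ?thesis unfolding C_def o_def by (intro holomorphic_intros)
  qed
  have T0: "T 0 = 0" using T(3)[of 0] S0 r1(1) by simp
  have C0: "C k 0 = 0" for k by (simp add: C_def T0 G0)
  have P_in: "P \<in> \<gamma> ` {-e<..<e}" using g0 e by force
  obtain \<epsilon>1 where \<epsilon>1: "\<epsilon>1 > 0" "ball P \<epsilon>1 \<inter> X \<subseteq> \<gamma> ` {-e<..<e}"
    using op P_in unfolding openin_contains_ball by blast
  from hom obtain g where hg: "homeomorphism {-e<..<e} (\<gamma> ` {-e<..<e}) \<gamma> g" by blast
  have g: "\<forall>x\<in>{-e<..<e}. g (\<gamma> x) = x" "\<forall>y\<in>\<gamma> ` {-e<..<e}. \<gamma> (g y) = y"
    "g ` (\<gamma> ` {-e<..<e}) = {-e<..<e}" "continuous_on (\<gamma> ` {-e<..<e}) g"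
    using hg by (simp_all add: homeomorphism_def)
  have gP: "g P = 0" using g(1) g0 e by force
  have "continuous (at P within \<gamma> ` {-e<..<e}) g" using g(4) P_in continuous_on_eq_continuous_within by blast
  then obtain \<epsilon>2 where \<epsilon>2: "\<epsilon>2 > 0" "\<forall>y\<in>\<gamma> ` {-e<..<e}. dist y P < \<epsilon>2 \<longrightarrow> dist (g y) (g P) < r1"
    using r1(1) unfolding continuous_within_eps_delta by blast
  define \<rho> where "\<rho> = min (min \<epsilon>1 \<epsilon>2) r"
  have \<rho>: "\<rho> > 0" using \<epsilon>1 \<epsilon>2 r by (simp add: \<rho>_def)
  have main: "complex_of_real (x$i - P$i) \<in> ball 0 r \<and>
        complex_of_real (f x) = K (complex_of_real (x$i - P$i)) \<and>
        (\<forall>k. complex_of_real (x$k - P$k) = C k (complex_of_real (x$i - P$i)))"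
    if x: "x \<in> X" "norm (x - P) < \<rho>" for x
  proof -
    have xB: "x \<in> \<gamma> ` {-e<..<e}" using \<epsilon>1(2) x by (auto simp: \<rho>_def dist_norm norm_minus_commute)
    define t where "t = g x"
    have tA: "t \<in> {-e<..<e}" using g(3) xB t_def by blast
    have xt: "\<gamma> t = x" using g(2) xB t_def by blast
    have "dist t 0 < r1" using \<epsilon>2(2) xB x gP by (auto simp: t_def \<rho>_def dist_norm)
    then have t1: "complex_of_real t \<in> ball 0 r1" by simp
    then have "complex_of_real t \<in> ball 0 d0" using r1(2) by blast
    then have td: "\<bar>t\<bar> < d0" by simp
    define w where "w = complex_of_real (x$i - P$i)"
    have wS: "w = S (of_real t)"
      using dG(3)[of t i] td d0(4)[of i] xt by (simp add: S_def w_def)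
    have "norm w \<le> norm (x - P)" unfolding w_def
      using component_le_norm_cart[of "x - P" i] by (simp del: of_real_diff add: of_real_diff[symmetric])
    then have wr: "w \<in> ball 0 r" using x(2) by (simp add: \<rho>_def)
    have Tw: "T w = of_real t" using T(3)[OF t1] wS by simp
    have "K w = of_real (f x)"
      using d\<Phi>(3)[of t] td d0(3) xt by (simp add: K_def Tw)
    moreover have "C k w = complex_of_real (x$k - P$k)" for k
      using dG(3)[of t k] td d0(4)[of k] xt by (simp add: C_def Tw)
    ultimately show ?thesis using wr by (simp add: w_def)
  qed
  show ?thesis
    apply (rule exI[of _ i], rule exI[of _ r], rule exI[of _ \<rho>], rule exI[of _ K], rule exI[of _ C])
    using r(1) \<rho> Kh Ch C0 main by blast
qed

lemma local_B:
  fixes X :: "(real^'n) set"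
  assumes "analytic_near X f P"
  shows "\<exists>h. pf h \<and> oclose X f h P N"
proof -
  obtain i r \<rho> K C where r: "r > 0" "\<rho> > 0" and Kh: "K holomorphic_on ball 0 r"
    and ch: "\<forall>x\<in>X. norm (x - P) < \<rho> \<longrightarrow> complex_of_real (x$i - P$i) \<in> ball 0 r \<and>
        complex_of_real (f x) = K (complex_of_real (x$i - P$i)) \<and>
        (\<forall>k. complex_of_real (x$k - P$k) = C k (complex_of_real (x$i - P$i)))"
    using chart[OF assms] by blast
  obtain M where M: "\<forall>w. norm w < r / 2 \<longrightarrow>
     norm (K w - (\<Sum>n<N. (deriv ^^ n) K 0 / fact n * w ^ n)) \<le> M * norm w ^ N"
    using holo_tail[OF Kh r(1)] by blast
  define c where "c = (\<lambda>n. (deriv ^^ n) K 0 / fact n)"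
  define h where "h = (\<lambda>x::real^'n. \<Sum>n<N. Re (c n) * (x$i - P$i) ^ n)"
  have pfh: "pf h" unfolding h_def
    by (intro pf_sum pf_mult pf_const pf_power pf_diff pf_coord)
  have "oclose X f h P N" unfolding oclose_def
  proof (intro exI conjI ballI impI)
    show "min \<rho> (r / 2) > 0" using r by simp
    fix x assume x: "x \<in> X" "norm (x - P) < min \<rho> (r / 2)"
    define s where "s = x$i - P$i"
    have s: "\<bar>s\<bar> \<le> norm (x - P)" unfolding s_def using component_le_norm_cart[of "x - P" i] by simp
    have "norm (x - P) < \<rho>" using x(2) by simp
    then have fx: "complex_of_real (f x) = K (of_real s)" unfolding s_def using ch x(1) by blast
    have ns: "norm (of_real s :: complex) < r / 2" using s x by simp
    have b: "norm (K (of_real s) - (\<Sum>n<N. c n * of_real s ^ n)) \<le> M * \<bar>s\<bar> ^ N"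
      using M[rule_format, OF ns] unfolding c_def by simp
    have re: "Re (K (of_real s) - (\<Sum>n<N. c n * of_real s ^ n)) = f x - h x"
    proof -
      have "Re (c n * of_real s ^ n) = Re (c n) * s ^ n" for n
        by (simp flip: of_real_power)
      then have r2: "Re (\<Sum>n<N. c n * of_real s ^ n) = h x"
        by (simp add: h_def Re_sum s_def)
      have r1: "Re (K (of_real s)) = f x" using fx by (metis Re_complex_of_real)
      show ?thesis using r1 r2 by simp
    qed
    have "\<bar>f x - h x\<bar> \<le> M * \<bar>s\<bar> ^ N" using b abs_Re_le_cmod re by (metis order_trans)
    also have "\<dots> \<le> max M 0 * \<bar>s\<bar> ^ N" by (intro mult_right_mono) auto
    also have "\<dots> \<le> max M 0 * norm (x - P) ^ N" using s by (intro mult_left_mono power_mono) auto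
    finally show "\<bar>f x - h x\<bar> \<le> max M 0 * norm (x - P) ^ N" .
  qed
  then show ?thesis using pfh by blast
qed

lemma local_A:
  fixes X F :: "(real^'n) set"
  assumes an\<phi>: "analytic_near X \<phi> P" and an\<psi>: "analytic_near X \<psi> P" and PX: "P \<in> X" and F: "finite F"
    and c\<phi>: "continuous_on X \<phi>" and c\<psi>: "continuous_on X \<psi>"
    and le: "\<forall>x\<in>X. \<phi> x \<le> \<psi> x" and zer: "\<forall>x\<in>X. \<psi> x = \<phi> x \<longrightarrow> x \<in> F"
  shows "\<exists>k c r. c > 0 \<and> r > 0 \<and> (\<forall>x\<in>X. norm (x - P) < r \<longrightarrow> c * norm (x - P) ^ k \<le> \<psi> x - \<phi> x)"
proof (cases "\<psi> P = \<phi> P")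
  case False
  then have pos: "\<psi> P - \<phi> P > 0" using le PX by force
  have "continuous (at P within X) (\<lambda>x. \<psi> x - \<phi> x)"
    using continuous_on_diff[OF c\<psi> c\<phi>] PX continuous_on_eq_continuous_within by blast
  then obtain r where r: "r > 0" "\<forall>x\<in>X. dist x P < r \<longrightarrow> dist (\<psi> x - \<phi> x) (\<psi> P - \<phi> P) < (\<psi> P - \<phi> P) / 2"
    using pos unfolding continuous_within_eps_delta by (metis half_gt_zero)
  show ?thesis
  proof (intro exI conjI ballI impI)
    show "(\<psi> P - \<phi> P) / 2 > 0" "r > 0" using pos r by auto
    fix x assume x: "x \<in> X" "norm (x - P) < r"
    then have "dist (\<psi> x - \<phi> x) (\<psi> P - \<phi> P) < (\<psi> P - \<phi> P) / 2" using r by (simp add: dist_norm)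
    then show "(\<psi> P - \<phi> P) / 2 * norm (x - P) ^ 0 \<le> \<psi> x - \<phi> x"
      unfolding dist_real_def abs_less_iff by (auto simp: field_simps)
  qed
next
  case True
  obtain \<gamma> e where par: "analytic_param X P \<gamma> e" using an\<phi> unfolding analytic_near_def by blast
  obtain i r\<phi> \<rho>\<phi> K\<phi> C\<phi> where r\<phi>: "r\<phi> > 0" "\<rho>\<phi> > 0" and K\<phi>h: "K\<phi> holomorphic_on ball 0 r\<phi>"
    and C\<phi>h: "\<forall>k. C\<phi> k holomorphic_on ball 0 r\<phi> \<and> C\<phi> k 0 = 0"
    and ch\<phi>: "\<forall>x\<in>X. norm (x - P) < \<rho>\<phi> \<longrightarrow> complex_of_real (x$i - P$i) \<in> ball 0 r\<phi> \<and>
        complex_of_real (\<phi> x) = K\<phi> (complex_of_real (x$i - P$i)) \<and>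
        (\<forall>k. complex_of_real (x$k - P$k) = C\<phi> k (complex_of_real (x$i - P$i)))"
    using chart[OF an\<phi>] by blast
  obtain j r\<psi> \<rho>\<psi> K\<psi> C\<psi> where r\<psi>: "r\<psi> > 0" "\<rho>\<psi> > 0" and K\<psi>h: "K\<psi> holomorphic_on ball 0 r\<psi>"
    and ch\<psi>: "\<forall>x\<in>X. norm (x - P) < \<rho>\<psi> \<longrightarrow> complex_of_real (x$j - P$j) \<in> ball 0 r\<psi> \<and>
        complex_of_real (\<psi> x) = K\<psi> (complex_of_real (x$j - P$j)) \<and>
        (\<forall>k. complex_of_real (x$k - P$k) = C\<psi> k (complex_of_real (x$j - P$j)))"
    using chart[OF an\<psi>] by blast
  have ch\<phi>1: "complex_of_real (\<phi> x) = K\<phi> (complex_of_real (x$i - P$i))"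
    if "x \<in> X" "norm (x - P) < \<rho>\<phi>" for x using ch\<phi> that by blast
  have ch\<phi>2: "complex_of_real (x$k - P$k) = C\<phi> k (complex_of_real (x$i - P$i))"
    if "x \<in> X" "norm (x - P) < \<rho>\<phi>" for x k using ch\<phi> that by blast
  have ch\<psi>1: "complex_of_real (\<psi> x) = K\<psi> (complex_of_real (x$j - P$j))"
    if "x \<in> X" "norm (x - P) < \<rho>\<psi>" for x using ch\<psi> that by blast
  have Cj: "C\<phi> j holomorphic_on ball 0 r\<phi>" "C\<phi> j 0 = 0" using C\<phi>h by auto
  have "continuous (at 0) (C\<phi> j)"
    using holomorphic_on_imp_continuous_on[OF Cj(1)] r\<phi>(1)
    by (simp add: continuous_on_eq_continuous_at)
  then obtain r2 where r2: "r2 > 0" "\<forall>w. dist w 0 < r2 \<longrightarrow> dist (C\<phi> j w) (C\<phi> j 0) < r\<psi>"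
    using r\<psi>(1) unfolding continuous_at_eps_delta by blast
  define r0 where "r0 = min r\<phi> r2"
  have r0: "r0 > 0" using r\<phi> r2 by (simp add: r0_def)
  have Cimg: "C\<phi> j ` ball 0 r0 \<subseteq> ball 0 r\<psi>"
  proof
    fix y assume "y \<in> C\<phi> j ` ball 0 r0"
    then obtain w where w: "w \<in> ball 0 r0" "y = C\<phi> j w" by blast
    then have "dist w 0 < r2" by (simp add: r0_def dist_norm)
    then show "y \<in> ball 0 r\<psi>" using r2(2) Cj(2) w by (simp add: dist_norm)
  qed
  define D where "D = (\<lambda>w. K\<psi> (C\<phi> j w) - K\<phi> w)"
  have Dh: "D holomorphic_on ball 0 r0"
  proof -
    have b: "ball (0::complex) r0 \<subseteq> ball 0 r\<phi>" by (rule subset_ball) (simp add: r0_def)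
    have "(K\<psi> \<circ> C\<phi> j) holomorphic_on ball 0 r0"
      using holomorphic_on_compose_gen[OF holomorphic_on_subset[OF Cj(1) b] K\<psi>h Cimg] .
    then show ?thesis unfolding D_def o_def
      by (intro holomorphic_intros holomorphic_on_subset[OF K\<phi>h b])
  qed
  define \<rho>0 where "\<rho>0 = min (min \<rho>\<phi> \<rho>\<psi>) r0"
  have \<rho>0: "\<rho>0 > 0" using r\<phi> r\<psi> r0 by (simp add: \<rho>0_def)
  have Dx: "D (complex_of_real (x$i - P$i)) = complex_of_real (\<psi> x - \<phi> x)"
    and wb: "complex_of_real (x$i - P$i) \<in> ball 0 r0"
    if x: "x \<in> X" "norm (x - P) < \<rho>0" for x
  proof -
    have x1: "norm (x - P) < \<rho>\<phi>" "norm (x - P) < \<rho>\<psi>" "norm (x - P) < r0" using x(2) by (auto simp: \<rho>0_def)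
    have "\<bar>x$i - P$i\<bar> \<le> norm (x - P)" using component_le_norm_cart[of "x - P" i] by simp
    then show "complex_of_real (x$i - P$i) \<in> ball 0 r0" using x1 by (simp del: of_real_diff add: of_real_diff[symmetric])
    have "C\<phi> j (complex_of_real (x$i - P$i)) = complex_of_real (x$j - P$j)"
      using ch\<phi>2[OF x(1) x1(1), of j] by simp
    then show "D (complex_of_real (x$i - P$i)) = complex_of_real (\<psi> x - \<phi> x)"
      unfolding D_def using ch\<psi>1[OF x(1) x1(2)] ch\<phi>1[OF x(1) x1(1)] by simp
  qed
  have D0: "D 0 = 0" using Dx[OF PX] \<rho>0 True by simp
  have nc: "\<not> D constant_on ball 0 r0"
  proof
    assume "D constant_on ball 0 r0"
    then obtain c where c: "\<forall>w\<in>ball 0 r0. D w = c" unfolding constant_on_def by blast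
    then have c0: "c = 0" using D0 r0 by force
    obtain x where x: "x \<in> X" "x \<notin> F" "norm (x - P) < \<rho>0" using nonisolated[OF par F \<rho>0] by blast
    have "\<psi> x \<noteq> \<phi> x" using zer x by blast
    moreover have "D (complex_of_real (x$i - P$i)) = 0" using c c0 wb[OF x(1) x(3)] by blast
    ultimately show False using Dx[OF x(1) x(3)] by simp
  qed
  have c0: "(0::complex) \<in> ball 0 r0" using r0 by simp
  obtain g r1 n where fac: "0 < n" "0 < r1" "ball (0::complex) r1 \<subseteq> ball 0 r0" "g holomorphic_on ball 0 r1"
    "\<And>w. w \<in> ball 0 r1 \<Longrightarrow> D w = (w - 0) ^ n * g w" "\<And>w. w \<in> ball 0 r1 \<Longrightarrow> g w \<noteq> 0"
  proof (rule holomorphic_factor_zero_nonconstant[OF Dh open_ball connected_ball c0 D0 nc])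
    fix g r n assume "0 < n" "0 < r" "ball (0::complex) r \<subseteq> ball 0 r0" "g holomorphic_on ball 0 r"
      "\<And>w. w \<in> ball 0 r \<Longrightarrow> D w = (w - 0) ^ n * g w" "\<And>w. w \<in> ball 0 r \<Longrightarrow> g w \<noteq> 0"
    then show thesis by (rule that)
  qed
  have g0: "g 0 \<noteq> 0" using fac(6)[of 0] fac(2) by simp
  have "continuous (at 0) g"
    using holomorphic_on_imp_continuous_on[OF fac(4)] fac(2)
    by (simp add: continuous_on_eq_continuous_at)
  then obtain r3 where r3: "r3 > 0" "\<forall>w. dist w 0 < r3 \<longrightarrow> dist (g w) (g 0) < norm (g 0) / 2"
    using g0 unfolding continuous_at_eps_delta by (metis half_gt_zero zero_less_norm_iff)
  have "\<forall>k. \<exists>M. \<forall>w. norm w < r\<phi> / 2 \<longrightarrow> norm (C\<phi> k w) \<le> M * norm w"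
  proof
    fix k
    obtain M where M: "\<forall>w. norm w < r\<phi> / 2 \<longrightarrow>
        norm (C\<phi> k w - (\<Sum>n<1. (deriv ^^ n) (C\<phi> k) 0 / fact n * w ^ n)) \<le> M * norm w ^ 1"
      using holo_tail[of "C\<phi> k" r\<phi> 1] C\<phi>h r\<phi>(1) by blast
    have "C\<phi> k 0 = 0" using C\<phi>h by blast
    then show "\<exists>M. \<forall>w. norm w < r\<phi> / 2 \<longrightarrow> norm (C\<phi> k w) \<le> M * norm w" using M by auto
  qed
  then obtain Mk where Mk: "\<And>k w. norm w < r\<phi> / 2 \<Longrightarrow> norm (C\<phi> k w) \<le> Mk k * norm w" by metis
  define Mt where "Mt = (\<Sum>k\<in>UNIV. \<bar>Mk k\<bar>) + 1"
  have "(\<Sum>k\<in>UNIV. \<bar>Mk k\<bar>) \<ge> 0" by (rule sum_nonneg) simp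
  then have Mt: "Mt > 0" unfolding Mt_def by linarith
  define \<rho>1 where "\<rho>1 = min (min \<rho>0 r1) (min r3 (r\<phi> / 2))"
  have \<rho>1: "\<rho>1 > 0" using \<rho>0 fac(2) r3 r\<phi> by (simp add: \<rho>1_def)
  show ?thesis
  proof (intro exI conjI ballI impI)
    show "norm (g 0) / 2 / Mt ^ n > 0" using g0 Mt by simp
    show "\<rho>1 > 0" by fact
    fix x assume x: "x \<in> X" "norm (x - P) < \<rho>1"
    define s where "s = x$i - P$i"
    define w where "w = complex_of_real s"
    have x0: "norm (x - P) < \<rho>0" "norm (x - P) < \<rho>\<phi>" using x(2) by (auto simp: \<rho>1_def \<rho>0_def)
    have sx: "\<bar>s\<bar> \<le> norm (x - P)" unfolding s_def using component_le_norm_cart[of "x - P" i] by simp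
    have nw: "norm w = \<bar>s\<bar>" by (simp add: w_def)
    have w1: "w \<in> ball 0 r1" "norm w < r3" "norm w < r\<phi> / 2" using sx x(2) nw by (auto simp: \<rho>1_def)
    have "norm (x - P) \<le> (\<Sum>k\<in>UNIV. \<bar>(x - P) $ k\<bar>)" by (rule norm_le_l1_cart)
    also have "\<dots> \<le> (\<Sum>k\<in>UNIV. \<bar>Mk k\<bar> * \<bar>s\<bar>)"
    proof (rule sum_mono)
      fix k
      have "complex_of_real (x$k - P$k) = C\<phi> k w" using ch\<phi>2[OF x(1) x0(2), of k] by (simp add: w_def s_def)
      then have "\<bar>x$k - P$k\<bar> = norm (C\<phi> k w)" by (metis norm_of_real)
      also have "\<dots> \<le> Mk k * norm w" using Mk w1(3) by blast
      also have "\<dots> \<le> \<bar>Mk k\<bar> * \<bar>s\<bar>" using nw by (simp add: mult_right_mono)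
      finally show "\<bar>(x - P) $ k\<bar> \<le> \<bar>Mk k\<bar> * \<bar>s\<bar>" by simp
    qed
    also have "\<dots> \<le> Mt * \<bar>s\<bar>" by (simp add: Mt_def sum_distrib_right[symmetric] distrib_right)
    finally have xs: "norm (x - P) \<le> Mt * \<bar>s\<bar>" .
    have "dist (g w) (g 0) < norm (g 0) / 2" using r3(2) w1(2) by (simp add: dist_norm)
    then have gw: "norm (g w) \<ge> norm (g 0) / 2"
      using norm_triangle_ineq2[of "g 0" "g w"] by (simp add: dist_norm norm_minus_commute)
    have "D w = complex_of_real (\<psi> x - \<phi> x)" using Dx[OF x(1) x0(1)] by (simp add: w_def s_def)
    moreover have "\<phi> x \<le> \<psi> x" using le x(1) by blast
    ultimately have "\<psi> x - \<phi> x = norm (D w)" by (simp del: of_real_diff add: of_real_diff[symmetric])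
    also have "\<dots> = \<bar>s\<bar> ^ n * norm (g w)" using fac(5)[OF w1(1)] nw by (simp add: norm_mult norm_power)
    finally have ps: "\<psi> x - \<phi> x = \<bar>s\<bar> ^ n * norm (g w)" .
    have "norm (g 0) / 2 / Mt ^ n * norm (x - P) ^ n = norm (g 0) / 2 * (norm (x - P) / Mt) ^ n"
      by (simp add: power_divide)
    also have "\<dots> \<le> norm (g 0) / 2 * \<bar>s\<bar> ^ n"
    proof (intro mult_left_mono power_mono)
      show "norm (x - P) / Mt \<le> \<bar>s\<bar>" using xs Mt by (simp add: divide_le_eq mult.commute)
    qed (use Mt in auto)
    also have "\<dots> \<le> norm (g w) * \<bar>s\<bar> ^ n" using gw by (intro mult_right_mono) auto
    finally show "norm (g 0) / 2 / Mt ^ n * norm (x - P) ^ n \<le> \<psi> x - \<phi> x"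
      using ps by (simp add: mult.commute)
  qed
qed

theorem lemma1p14:
  fixes I :: "(complex^'n \<Rightarrow> complex) set"
    and Ps :: "(real^'n) set"
    and \<phi> \<psi> :: "real^'n \<Rightarrow> real"
  assumes "nonsingular_affine_curve I"
    and "compact (real_points I)" and "real_points I \<noteq> {}"
    and "finite Ps" and "Ps \<subseteq> real_points I"
    and "\<phi> \<in> ringA (real_points I) Ps" and "\<psi> \<in> ringA (real_points I) Ps"
    and "\<forall>x\<in>real_points I. \<phi> x \<le> \<psi> x"
    and "\<forall>x\<in>real_points I. \<psi> x = \<phi> x \<longrightarrow> x \<in> Ps"
  shows "\<exists>p. regular_fun I p \<and> (\<forall>x\<in>real_points I. \<phi> x \<le> p x \<and> p x \<le> \<psi> x)"
proof -
  define X where "X = real_points I"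
  have X: "compact X" "finite Ps" "Ps \<subseteq> X" using assms(2,4,5) by (auto simp: X_def)
  have c\<phi>: "continuous_on X \<phi>" and an\<phi>: "\<forall>P\<in>Ps. analytic_near X \<phi> P"
    using assms(6) by (auto simp: ringA_def X_def)
  have c\<psi>: "continuous_on X \<psi>" and an\<psi>: "\<forall>P\<in>Ps. analytic_near X \<psi> P"
    using assms(7) by (auto simp: ringA_def X_def)
  have le: "\<forall>x\<in>X. \<phi> x \<le> \<psi> x" and zer: "\<forall>x\<in>X. \<psi> x = \<phi> x \<longrightarrow> x \<in> Ps"
    using assms(8,9) by (auto simp: X_def)
  have A: "\<forall>P\<in>Ps. \<exists>k c r. c > 0 \<and> r > 0 \<and> (\<forall>x\<in>X. norm (x - P) < r \<longrightarrow> c * norm (x - P) ^ k \<le> \<psi> x - \<phi> x)"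
  proof
    fix P assume P: "P \<in> Ps"
    then have "P \<in> X" using X by blast
    then show "\<exists>k c r. c > 0 \<and> r > 0 \<and> (\<forall>x\<in>X. norm (x - P) < r \<longrightarrow> c * norm (x - P) ^ k \<le> \<psi> x - \<phi> x)"
      using local_A[of X \<phi> P \<psi> Ps] an\<phi> an\<psi> P X(2) c\<phi> c\<psi> le zer by blast
  qed
  have B: "\<forall>P\<in>Ps. \<forall>N. \<exists>h. pf h \<and> oclose X \<phi> h P N"
    using local_B an\<phi> by blast
  obtain p where p: "pf p" "\<forall>x\<in>X. \<phi> x \<le> p x \<and> p x \<le> \<psi> x"
    using assembly[OF X(1) X(2) X(3) c\<phi> c\<psi> le zer A B] by blast
  then show ?thesis using pf_regular[OF p(1), of I] by (auto simp: X_def)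
qed

end
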